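(* Let $\mu,\tau$ be partitions of $s$. There is a bijection between the set of terminal vertices of the tree $\mathscr T(\mu)$ labelled by $(\tau,\tau)$ and the set $\mathrm{SStd}_s(\tau,\mu)$ of semistandard Young tableaux of shape $\tau$ and weight $\mu$.
   Context: A pair of partitions for $s$ is $(\tau^\sharp,\tau)$ with $\tau$ a composition of $s$ and $\tau^\sharp$ a partition with $\tau^\sharp_c\le\tau_c$ for all $c$. For such a pair and $c>1$: $r^m_c(\tau)$ is the composition obtained from $\tau$ by moving the last $m$ boxes of row $c$ to the end of row $c-1$; $a_c(\tau^\sharp)$ is obtained by adding one box at the end of row $c$ of $\tau^\sharp$ if the result is a partition, and otherwise the pair $(a_c(\tau^\sharp),\tau)$ is replaced by the symbol $(\varnothing,\varnothing)$. The rooted tree $\mathscr T(\mu)$ (for $\mu\vdash s$) has vertices labelled by pairs of partitions; labels $(\tau^\sharp,\tau)$ and $(\eta^\sharp,\tau)$ with $\tau^\sharp,\eta^\sharp$ differing only in the first row are identified, and one writes labels with $\tau^\sharp_1=\tau_1$. The root is labelled $((\mu_1),\mu)$. For a vertex labelled $(\tau^\sharp,\tau)\neq(\varnothing,\varnothing)$, if there is a minimal $1<c\le\ell(\mu)$ with $\tau^\sharp_c<\tau_c$ then the vertex has exactly two children, labelled $(\tau^\sharp,r^{\tau_c-\tau^\sharp_c}_c(\tau))$ and $(a_c(\tau^\sharp),\tau)$; otherwise ($\tau^\sharp=\tau$) the vertex is terminal. Vertices labelled $(\varnothing,\varnothing)$ are also leaves but are not counted as terminal vertices. A semistandard Young tableau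 of shape $\tau$ and weight $\mu$ is a filling of the Young diagram of $\tau$ with $\mu_1$ ones, $\mu_2$ twos, etc., weakly increasing along rows and strictly increasing down columns. *)

theory Defs
  imports Main
begin

text \<open>Rows are indexed from 1. Compositions / partitions occurring inside tree labels are
represented as functions nat \<Rightarrow> nat (row c \<mapsto> length of row c), zero at index 0 and
beyond the last row.\<close>

definition is_partition_of :: "nat \<Rightarrow> nat list \<Rightarrow> bool" where
  "is_partition_of s lam \<longleftrightarrow> sorted_wrt (\<ge>) lam \<and> (\<forall>x\<in>set lam. 0 < x) \<and> sum_list lam = s"

definition pad :: "nat list \<Rightarrow> nat \<Rightarrow> nat" where
  "pad lam i = (if 1 \<le> i \<and> i \<le> length lam then lam ! (i - 1) else 0)"

definition is_part_fun :: "(nat \<Rightarrow> nat) \<Rightarrow> bool" where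
  "is_part_fun f \<longleftrightarrow> (\<forall>i\<ge>1. f (Suc i) \<le> f i)"

definition rmove :: "nat \<Rightarrow> nat \<Rightarrow> (nat \<Rightarrow> nat) \<Rightarrow> (nat \<Rightarrow> nat)" where
  "rmove c m t = t(c := t c - m, c - 1 := t (c - 1) + m)"

text \<open>Labels: None is the symbol (\<emptyset>,\<emptyset>); Some (\<tau>#, \<tau>) otherwise. Labels are kept in the
normal form \<tau>#_1 = \<tau>_1 (identification of labels differing only in the first row of \<tau>#).\<close>
type_synonym label = "((nat \<Rightarrow> nat) \<times> (nat \<Rightarrow> nat)) option"

definition normalize :: "(nat \<Rightarrow> nat) \<Rightarrow> (nat \<Rightarrow> nat) \<Rightarrow> label" where
  "normalize sh t = Some (sh(1 := t 1), t)"

definition root_label :: "nat list \<Rightarrow> label" where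
  "root_label mu = normalize (pad (take 1 mu)) (pad mu)"

definition has_c :: "nat list \<Rightarrow> (nat \<Rightarrow> nat) \<Rightarrow> (nat \<Rightarrow> nat) \<Rightarrow> bool" where
  "has_c mu sh t \<longleftrightarrow> (\<exists>c. 1 < c \<and> c \<le> length mu \<and> sh c < t c)"

definition min_c :: "nat list \<Rightarrow> (nat \<Rightarrow> nat) \<Rightarrow> (nat \<Rightarrow> nat) \<Rightarrow> nat" where
  "min_c mu sh t = (LEAST c. 1 < c \<and> c \<le> length mu \<and> sh c < t c)"

text \<open>Child of a vertex: False = first child (\<tau>#, r_c^{\<tau>_c-\<tau>#_c}(\<tau>)),
True = second child (a_c(\<tau>#), \<tau>) or (\<emptyset>,\<emptyset>).\<close>
definition child :: "nat list \<Rightarrow> label \<Rightarrow> bool \<Rightarrow> label" where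
  "child mu L b = (case L of None \<Rightarrow> None | Some (sh, t) \<Rightarrow>
     (let c = min_c mu sh t in
      if \<not> b then normalize sh (rmove c (t c - sh c) t)
      else (let sh' = sh(c := sh c + 1) in
            if is_part_fun sh' then normalize sh' t else None)))"

text \<open>Vertices of \<T>(\<mu>) are addressed by their paths from the root.\<close>
definition tree_label :: "nat list \<Rightarrow> bool list \<Rightarrow> label" where
  "tree_label mu p = foldl (child mu) (root_label mu) p"

definition internal_label :: "nat list \<Rightarrow> label \<Rightarrow> bool" where
  "internal_label mu L \<longleftrightarrow> (case L of None \<Rightarrow> False | Some (sh, t) \<Rightarrow> has_c mu sh t)"

definition tree_vertices :: "nat list \<Rightarrow> bool list set" where
  "tree_vertices mu = {p. \<forall>k < length p. internal_label mu (tree_label mu (take k p))}"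

definition terminal_vertices :: "nat list \<Rightarrow> bool list set" where
  "terminal_vertices mu = {p \<in> tree_vertices mu. tree_label mu p \<noteq> None \<and>
                                  \<not> internal_label mu (tree_label mu p)}"

definition terminal_vertices_labelled :: "nat list \<Rightarrow> nat list \<Rightarrow> bool list set" where
  "terminal_vertices_labelled mu tau =
     {p \<in> terminal_vertices mu. tree_label mu p = Some (pad tau, pad tau)}"

text \<open>Semistandard Young tableaux (cells (i,j), row i \<ge> 1, column j \<ge> 1), as fillings
that are 0 outside the diagram.\<close>
definition cells :: "nat list \<Rightarrow> (nat \<times> nat) set" where
  "cells tau = {(i, j). 1 \<le> i \<and> i \<le> length tau \<and> 1 \<le> j \<and> j \<le> tau ! (i - 1)}"

definition SStd :: "nat list \<Rightarrow> nat list \<Rightarrow> (nat \<Rightarrow> nat \<Rightarrow> nat) set" where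
  "SStd tau mu = {T.
     (\<forall>i j. (i, j) \<notin> cells tau \<longrightarrow> T i j = 0) \<and>
     (\<forall>(i, j) \<in> cells tau. 1 \<le> T i j) \<and>
     (\<forall>k\<ge>1. card {(i, j) \<in> cells tau. T i j = k} = pad mu k) \<and>
     (\<forall>i j. (i, j) \<in> cells tau \<and> (i, Suc j) \<in> cells tau \<longrightarrow> T i j \<le> T i (Suc j)) \<and>
     (\<forall>i j. (i, j) \<in> cells tau \<and> (Suc i, j) \<in> cells tau \<longrightarrow> T i j < T (Suc i) j)}"

end

theory Submission
  imports Defs
begin


definition Rs :: "nat \<Rightarrow> (nat\<Rightarrow>nat) \<Rightarrow> nat \<Rightarrow> (nat\<Rightarrow>nat) \<Rightarrow> bool" where
 "Rs j v w v' \<longleftrightarrow> (\<forall>i. (i = 0 \<or> j < i) \<longrightarrow> v' i = v i) \<and> (\<forall>i. 1 \<le> i \<and> i \<le> j \<longrightarrow> v i \<le> v' i)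
   \<and> (\<forall>i. 2 \<le> i \<and> i \<le> j \<longrightarrow> v' i \<le> v (i-1)) \<and> (\<Sum>i=1..j. v' i - v i) = w"

fun Ch :: "(nat\<Rightarrow>nat) \<Rightarrow> (nat\<Rightarrow>nat) \<Rightarrow> nat \<Rightarrow> nat list \<Rightarrow> (nat\<Rightarrow>nat) list set" where
  "Ch P v j [] = (if v = P then {[]} else {})"
| "Ch P v j (w#ws) = {v'#rest | v' rest. Rs j v w v' \<and> rest \<in> Ch P v' (Suc j) ws}"

lemma Rs_zero:
  assumes "is_part_fun v"
  shows "Rs j v 0 v' \<longleftrightarrow> v' = v"
proof
  assume r: "Rs j v 0 v'"
  then have s: "(\<Sum>i=1..j. v' i - v i) = 0" and ge: "\<forall>i. 1 \<le> i \<and> i \<le> j \<longrightarrow> v i \<le> v' i"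
    and out: "\<forall>i. (i = 0 \<or> j < i) \<longrightarrow> v' i = v i" unfolding Rs_def by auto
  from s have "\<forall>i\<in>{1..j}. v' i - v i = 0" by simp
  show "v' = v"
  proof
    fix i show "v' i = v i"
    proof (cases "i = 0 \<or> j < i")
      case True then show ?thesis using out by auto
    next
      case False
      then have "i \<in> {1..j}" by auto
      then have "v' i - v i = 0" "v i \<le> v' i" using ge \<open>\<forall>i\<in>{1..j}. v' i - v i = 0\<close> by auto
      then show ?thesis by simp
    qed
  qed
next
  assume "v' = v"
  moreover have "\<forall>i. 2 \<le> i \<and> i \<le> j \<longrightarrow> v i \<le> v (i-1)"
  proof (intro allI impI)
    fix i :: nat assume "2 \<le> i \<and> i \<le> j"
    then have "1 \<le> i - 1" "Suc (i-1) = i" by auto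
    then show "v i \<le> v (i-1)" using assms unfolding is_part_fun_def by metis
  qed
  ultimately show "Rs j v 0 v'" unfolding Rs_def by auto
qed

lemma part_Rs:
  assumes "is_part_fun v" "Rs j v w v'"
  shows "is_part_fun v'"
  unfolding is_part_fun_def
proof (intro allI impI)
  fix i :: nat assume i: "1 \<le> i"
  show "v' (Suc i) \<le> v' i"
  proof (cases "Suc i \<le> j")
    case True
    have h: "\<forall>i. 2 \<le> i \<and> i \<le> j \<longrightarrow> v' i \<le> v (i-1)" using assms(2) unfolding Rs_def by blast
    then have "v' (Suc i) \<le> v (Suc i - 1)" using h[rule_format, of "Suc i"] i True by simp
    then have "v' (Suc i) \<le> v i" by simp
    also have "v i \<le> v' i" using assms(2) i True unfolding Rs_def by auto
    finally show ?thesis .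
  next
    case False
    then have "v' (Suc i) = v (Suc i)" using assms(2) unfolding Rs_def by auto
    also have "\<dots> \<le> v i" using assms(1) i unfolding is_part_fun_def by auto
    also have "v i \<le> v' i" using assms(2) i False unfolding Rs_def by (cases "i \<le> j") auto
    finally show ?thesis .
  qed
qed

lemma Ch_zero:
  assumes "is_part_fun v"
  shows "Ch P v j (0#ws) = (\<lambda>x. v#x) ` Ch P v (Suc j) ws"
  using Rs_zero[OF assms] by auto

lemma card_Ch_zeros:
  assumes "is_part_fun v" "\<forall>x\<in>set xs. x = 0"
  shows "card (Ch P v j (xs@ws)) = card (Ch P v (j + length xs) ws)"
  using assms(2)
proof (induction xs arbitrary: j)
  case Nil then show ?case by simp
next
  case (Cons x xs)
  then have "x = 0" by simp
  then have "Ch P v j ((x#xs)@ws) = (\<lambda>y. v#y) ` Ch P v (Suc j) (xs@ws)"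
    using Ch_zero[OF assms(1)] by simp
  then have "card (Ch P v j ((x#xs)@ws)) = card (Ch P v (Suc j) (xs@ws))"
    by (simp add: card_image inj_on_def)
  also have "\<dots> = card (Ch P v (Suc j + length xs) ws)" using Cons by simp
  finally show ?case by simp
qed

lemma finite_Rs: "finite {v'. Rs j v w v'}"
proof -
  let ?f = "\<lambda>v'. map v' [0..<Suc j]"
  let ?B = "{..w + Max (v ` {0..j})}"
  have inj: "inj_on ?f {v'. Rs j v w v'}"
  proof (rule inj_onI)
    fix a b assume a: "a \<in> {v'. Rs j v w v'}" and b: "b \<in> {v'. Rs j v w v'}" and e: "?f a = ?f b"
    show "a = b"
    proof
      fix i show "a i = b i"
      proof (cases "i \<le> j")
        case True
        have "\<forall>x\<in>set [0..<Suc j]. a x = b x" using e by (simp only: map_eq_conv)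
        then show ?thesis using True by (simp del: upt_Suc)
      next
        case False then show ?thesis using a b unfolding Rs_def by auto
      qed
    qed
  qed
  have key: "x \<in> ?B" if r: "Rs j v w v'" and x: "x \<in> set (map v' [0..<Suc j])" for v' x
  proof -
    from x obtain i where i: "i \<le> j" "x = v' i" by (auto simp del: upt_Suc simp: less_Suc_eq_le)
    have "v' i \<le> w + v i"
    proof (cases "i = 0")
      case True then show ?thesis using r unfolding Rs_def by auto
    next
      case False
      then have "i \<in> {1..j}" using i by auto
      then have "v' i - v i \<le> (\<Sum>i=1..j. v' i - v i)"
        by (intro member_le_sum) auto
      then show ?thesis using r unfolding Rs_def by auto
    qed
    also have "v i \<le> Max (v ` {0..j})" using i by (intro Max_ge) auto
    finally show "x \<in> ?B" using i by auto
  qed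
  have "?f ` {v'. Rs j v w v'} \<subseteq> {xs. set xs \<subseteq> ?B \<and> length xs = Suc j}"
    using key by (auto simp del: upt_Suc)
  then have "finite (?f ` {v'. Rs j v w v'})"
    by (rule finite_subset) (rule finite_lists_length_eq, simp)
  then show ?thesis using inj finite_imageD by blast
qed

lemma finite_Ch: "finite (Ch P v j ws)"
proof (induction ws arbitrary: v j)
  case Nil then show ?case by simp
next
  case (Cons w ws)
  have "Ch P v j (w#ws) = (\<Union>v'\<in>{v'. Rs j v w v'}. (\<lambda>x. v'#x) ` Ch P v' (Suc j) ws)" by auto
  then show ?case using finite_Rs Cons by simp
qed

lemma sum_split_last:
  fixes c :: nat and f :: "nat \<Rightarrow> nat"
  assumes "2 \<le> c"
  shows "(\<Sum>i=1..c. f i) = (\<Sum>i=1..c-1. f i) + (f c :: nat)"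
proof -
  obtain c' where c: "c = Suc c'" "1 \<le> c'" using assms by (cases c) auto
  then show ?thesis by simp
qed

lemma RsA:
  assumes "2 \<le> c" "0 < r"
  shows "(Rs c v r v' \<and> v c < v' c) \<longleftrightarrow> (v c + 1 \<le> v (c-1) \<and> Rs c (v(c := v c + 1)) (r-1) v')"
proof -
  have eq: "(\<Sum>i=1..c-1. v' i - (v(c := v c + 1)) i) = (\<Sum>i=1..c-1. v' i - v i)"
    using assms by (intro sum.cong) auto
  have s1: "(\<Sum>i=1..c. v' i - v i) = (\<Sum>i=1..c-1. v' i - v i) + (v' c - v c)"
    using sum_split_last[OF assms(1)] .
  have s2: "(\<Sum>i=1..c. v' i - (v(c := v c + 1)) i) = (\<Sum>i=1..c-1. v' i - v i) + (v' c - (v c + 1))"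
    using sum_split_last[OF assms(1), of "\<lambda>i. v' i - (v(c := v c + 1)) i"] eq by simp
  show ?thesis
  proof
    assume h: "Rs c v r v' \<and> v c < v' c"
    then have cap: "v' c \<le> v (c-1)" using assms unfolding Rs_def by auto
    have "Rs c (v(c := v c + 1)) (r-1) v'" unfolding Rs_def
    proof (intro conjI allI impI)
      fix i assume "i = 0 \<or> c < i"
      then show "v' i = (v(c := v c + 1)) i" using h unfolding Rs_def by auto
    next
      fix i assume "1 \<le> i \<and> i \<le> c" then show "(v(c := v c + 1)) i \<le> v' i" using h unfolding Rs_def by auto
    next
      fix i assume i: "2 \<le> i \<and> i \<le> c"
      then have "v' i \<le> v (i-1)" using h unfolding Rs_def by blast
      moreover have "i - 1 \<noteq> c" using i by auto
      ultimately show "v' i \<le> (v(c := v c + 1)) (i-1)" by simp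
    next
      show "(\<Sum>i=1..c. v' i - (v(c := v c + 1)) i) = r - 1" using h s1 s2 unfolding Rs_def by auto
    qed
    then show "v c + 1 \<le> v (c-1) \<and> Rs c (v(c := v c + 1)) (r-1) v'" using h cap by auto
  next
    assume h: "v c + 1 \<le> v (c-1) \<and> Rs c (v(c := v c + 1)) (r-1) v'"
    then have h2: "Rs c (v(c := v c + 1)) (r-1) v'" by blast
    have c1: "1 \<le> c \<and> c \<le> c" using assms by auto
    have vc: "v c + 1 \<le> v' c" using h2 c1 unfolding Rs_def by (metis fun_upd_same)
    have "Rs c v r v'" unfolding Rs_def
    proof (intro conjI allI impI)
      fix i assume "i = 0 \<or> c < i"
      then show "v' i = v i" using h2 unfolding Rs_def by (metis fun_upd_other less_irrefl_nat not_one_le_zero c1)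
    next
      fix i assume i: "1 \<le> i \<and> i \<le> c" 
      show "v i \<le> v' i"
      proof (cases "i = c")
        case True then show ?thesis using vc by simp
      next
        case False then show ?thesis using h2 i unfolding Rs_def by (metis fun_upd_other)
      qed
    next
      fix i assume i: "2 \<le> i \<and> i \<le> c"
      then have "v' i \<le> (v(c := v c + 1)) (i-1)" using h2 unfolding Rs_def by blast
      moreover have "i - 1 \<noteq> c" using i by auto
      ultimately show "v' i \<le> v (i-1)" by simp
    next
      have "(\<Sum>i=1..c. v' i - (v(c := v c + 1)) i) = r - 1" using h2 unfolding Rs_def by blast
      then show "(\<Sum>i=1..c. v' i - v i) = r" using s1 s2 vc assms(2) by simp
    qed
    then show "Rs c v r v' \<and> v c < v' c" using vc by auto
  qed
qed

lemma RsB: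
  assumes "2 \<le> c" "v c \<le> v (c-1)"
  shows "(Rs c v r v' \<and> v' c = v c) \<longleftrightarrow> Rs (c-1) v r v'"
proof -
  have s1: "(\<Sum>i=1..c. v' i - v i) = (\<Sum>i=1..c-1. v' i - v i) + (v' c - v c)"
    using sum_split_last[OF assms(1)] .
  show ?thesis
  proof
    assume h: "Rs c v r v' \<and> v' c = v c"
    show "Rs (c-1) v r v'" unfolding Rs_def
    proof (intro conjI allI impI)
      fix i assume "i = 0 \<or> c - 1 < i"
      then show "v' i = v i" using h unfolding Rs_def by (cases "i = c") auto
    next
      fix i assume "1 \<le> i \<and> i \<le> c - 1" then show "v i \<le> v' i" using h unfolding Rs_def by auto
    next
      fix i assume "2 \<le> i \<and> i \<le> c - 1" then show "v' i \<le> v (i-1)" using h unfolding Rs_def by auto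
    next
      show "(\<Sum>i=1..c-1. v' i - v i) = r" using h s1 unfolding Rs_def by auto
    qed
  next
    assume h: "Rs (c-1) v r v'"
    then have vc: "v' c = v c" unfolding Rs_def using assms by auto
    have "Rs c v r v'" unfolding Rs_def
    proof (intro conjI allI impI)
      fix i assume "i = 0 \<or> c < i"
      then show "v' i = v i" using h unfolding Rs_def by auto
    next
      fix i assume "1 \<le> i \<and> i \<le> c" then show "v i \<le> v' i" using h vc unfolding Rs_def by (cases "i = c") auto
    next
      fix i assume "2 \<le> i \<and> i \<le> c" then show "v' i \<le> v (i-1)" using h vc assms unfolding Rs_def by (cases "i = c") auto
    next
      show "(\<Sum>i=1..c. v' i - v i) = r" using h s1 vc unfolding Rs_def by auto
    qed
    then show "Rs c v r v' \<and> v' c = v c" using vc by auto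
  qed
qed

lemma part_le_prev:
  assumes "is_part_fun v" "2 \<le> c"
  shows "v c \<le> v (c-1)"
proof -
  have "1 \<le> c - 1" "Suc (c-1) = c" using assms(2) by auto
  then show ?thesis using assms(1) unfolding is_part_fun_def by metis
qed

lemma card_Ch_split:
  assumes pv: "is_part_fun v" and c2: "2 \<le> c" and r0: "0 < r"
  shows "card (Ch P v c (r#ws)) = (if v c + 1 \<le> v (c-1) then card (Ch P (v(c := v c + 1)) c ((r-1)#ws)) else 0)
      + card (Ch P v (c-1) (r#0#ws))"
proof -
  let ?S = "Ch P v c (r#ws)"
  define A where "A = {x \<in> ?S. v c < hd x c}"
  define B where "B = {x \<in> ?S. hd x c = v c}"
  have "?S = A \<union> B"
  proof
    show "?S \<subseteq> A \<union> B"
    proof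
      fix x assume x: "x \<in> ?S"
      then obtain v' rest where "x = v'#rest" "Rs c v r v'" by auto
      then have "v c \<le> hd x c" using c2 unfolding Rs_def by auto
      then show "x \<in> A \<union> B" using x unfolding A_def B_def by auto
    qed
  qed (auto simp: A_def B_def)
  moreover have "A \<inter> B = {}" unfolding A_def B_def by auto
  moreover have "finite A" "finite B" unfolding A_def B_def using finite_Ch[of P v c "r#ws"] by auto
  ultimately have cS: "card ?S = card A + card B" by (simp add: card_Un_disjoint)
  have A_eq: "A = {v'#rest | v' rest. (Rs c v r v' \<and> v c < v' c) \<and> rest \<in> Ch P v' (Suc c) ws}"
    unfolding A_def by auto
  also have "\<dots> = {v'#rest | v' rest. (v c + 1 \<le> v (c-1) \<and> Rs c (v(c := v c + 1)) (r-1) v') \<and> rest \<in> Ch P v' (Suc c) ws}"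
    using RsA[OF c2 r0] by blast
  finally have A_eq2: "A = (if v c + 1 \<le> v (c-1) then Ch P (v(c := v c + 1)) c ((r-1)#ws) else {})"
    by auto
  have vc: "v c \<le> v (c-1)" using part_le_prev[OF pv c2] .
  have sc: "Suc (c-1) = c" using c2 by auto
  have B_eq: "(\<lambda>x. hd x # x) ` B = Ch P v (c-1) (r#0#ws)"
  proof
    show "(\<lambda>x. hd x # x) ` B \<subseteq> Ch P v (c-1) (r#0#ws)"
    proof
      fix y assume "y \<in> (\<lambda>x. hd x # x) ` B"
      then obtain x where x: "x \<in> B" "y = hd x # x" by auto
      then obtain v' rest where xr: "x = v'#rest" "Rs c v r v'" "rest \<in> Ch P v' (Suc c) ws" "v' c = v c"
        unfolding B_def by auto
      then have r1: "Rs (c-1) v r v'" using RsB[OF c2 vc] by blast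
      have "x \<in> Ch P v' c (0#ws)" using xr Ch_zero[OF part_Rs[OF pv r1]] by auto
      then show "y \<in> Ch P v (c-1) (r#0#ws)" using r1 x xr sc by auto
    qed
  next
    show "Ch P v (c-1) (r#0#ws) \<subseteq> (\<lambda>x. hd x # x) ` B"
    proof
      fix y assume "y \<in> Ch P v (c-1) (r#0#ws)"
      then obtain v' z where yz: "y = v'#z" "Rs (c-1) v r v'" "z \<in> Ch P v' c (0#ws)" using sc by auto
      then obtain rest where z: "z = v'#rest" "rest \<in> Ch P v' (Suc c) ws"
        using Ch_zero[OF part_Rs[OF pv yz(2)], of P c ws] yz(3) by auto
      have "Rs c v r v' \<and> v' c = v c" using RsB[OF c2 vc] yz by blast
      then have "z \<in> B" unfolding B_def using z by auto
      then show "y \<in> (\<lambda>x. hd x # x) ` B" using yz z by (intro image_eqI[of _ _ z]) auto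
    qed
  qed
  have "card B = card (Ch P v (c-1) (r#0#ws))"
    unfolding B_eq[symmetric] by (rule card_image[symmetric]) (auto simp: inj_on_def)
  then show ?thesis using cS A_eq2 by simp
qed

lemma card_Ch_one:
  assumes pv: "is_part_fun v"
  shows "card (Ch P v 1 (r#0#ws)) = card (Ch P (v(1 := v 1 + r)) 3 ws)"
proof -
  let ?u = "v(1 := v 1 + r)"
  have R: "Rs 1 v r v' \<longleftrightarrow> v' = ?u" for v'
  proof
    assume h: "Rs 1 v r v'"
    show "v' = ?u"
    proof
      fix i :: nat
      have "i = 0 \<or> i = 1 \<or> 1 < i" by auto
      then show "v' i = ?u i" using h unfolding Rs_def by (elim disjE) auto
    qed
  qed (auto simp: Rs_def)
  have pu: "is_part_fun ?u" using part_Rs[OF pv, of 1 r] R by blast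
  have "Ch P v 1 (r#0#ws) = (\<lambda>x. ?u # ?u # x) ` Ch P ?u 3 ws"
    using R Rs_zero[OF pu] by (auto simp: numeral_3_eq_3 numeral_2_eq_2)
  then show ?thesis by (simp add: card_image inj_on_def)
qed



definition Inv :: "nat list \<Rightarrow> (nat\<Rightarrow>nat) \<Rightarrow> (nat\<Rightarrow>nat) \<Rightarrow> bool" where
  "Inv mu sh t \<longleftrightarrow> is_part_fun sh \<and> sh 1 = t 1 \<and> (\<forall>j. 2 \<le> j \<and> j \<le> length mu \<longrightarrow> sh j \<le> t j)
     \<and> (\<forall>j. (j = 0 \<or> length mu < j) \<longrightarrow> sh j = 0 \<and> t j = 0)"

lemma minc:
  assumes "has_c mu sh t"
  shows "1 < min_c mu sh t" "min_c mu sh t \<le> length mu" "sh (min_c mu sh t) < t (min_c mu sh t)"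
    "\<And>j. j < min_c mu sh t \<Longrightarrow> 1 < j \<Longrightarrow> j \<le> length mu \<Longrightarrow> \<not> sh j < t j"
proof -
  have ex: "\<exists>c. 1 < c \<and> c \<le> length mu \<and> sh c < t c" using assms unfolding has_c_def .
  show "1 < min_c mu sh t" "min_c mu sh t \<le> length mu" "sh (min_c mu sh t) < t (min_c mu sh t)"
    using LeastI_ex[OF ex] unfolding min_c_def by auto
  fix j assume "j < min_c mu sh t" "1 < j" "j \<le> length mu"
  then show "\<not> sh j < t j" unfolding min_c_def using not_less_Least by blast
qed

lemma part_upd_iff:
  assumes "is_part_fun sh" "2 \<le> c"
  shows "is_part_fun (sh(c := sh c + 1)) \<longleftrightarrow> sh c + 1 \<le> sh (c-1)"
proof
  assume "is_part_fun (sh(c := sh c + 1))"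
  moreover have "1 \<le> c - 1" using assms(2) by auto
  ultimately have "(sh(c := sh c + 1)) (Suc (c-1)) \<le> (sh(c := sh c + 1)) (c-1)"
    unfolding is_part_fun_def by blast
  moreover have "c - 1 \<noteq> c" "Suc (c-1) = c" using assms(2) by auto
  ultimately show "sh c + 1 \<le> sh (c-1)" by simp
next
  assume h: "sh c + 1 \<le> sh (c-1)"
  show "is_part_fun (sh(c := sh c + 1))" unfolding is_part_fun_def
  proof (intro allI impI)
    fix i :: nat assume i: "1 \<le> i"
    have p: "sh (Suc i) \<le> sh i" using assms(1) i unfolding is_part_fun_def by auto
    show "(sh(c := sh c + 1)) (Suc i) \<le> (sh(c := sh c + 1)) i"
    proof (cases "Suc i = c")
      case True
      then have "i = c - 1" by auto
      then show ?thesis using h True by auto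
    next
      case False then show ?thesis using p by auto
    qed
  qed
qed

lemma child_T:
  assumes inv: "Inv mu sh t" and hc: "has_c mu sh t" and c: "c = min_c mu sh t"
  shows "child mu (Some (sh,t)) True = (if sh c + 1 \<le> sh (c-1) then Some (sh(c := sh c + 1), t) else None)"
proof -
  have c2: "2 \<le> c" using minc(1)[OF hc] c by auto
  have pf: "is_part_fun sh" "sh 1 = t 1" using inv unfolding Inv_def by auto
  have "(sh(c := sh c + 1))(1 := t 1) = sh(c := sh c + 1)" using c2 pf(2) by (auto simp: fun_eq_iff)
  then show ?thesis unfolding child_def Let_def normalize_def using part_upd_iff[OF pf(1) c2] c by auto
qed

lemma child_F:
  assumes inv: "Inv mu sh t" and hc: "has_c mu sh t" and c: "c = min_c mu sh t"
  shows "child mu (Some (sh,t)) False =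
     Some (sh(1 := (t(c := sh c, c - 1 := t (c-1) + (t c - sh c))) 1), t(c := sh c, c - 1 := t (c-1) + (t c - sh c)))"
proof -
  have lt: "sh c < t c" using minc(3)[OF hc] c by auto
  then have "t c - (t c - sh c) = sh c" by auto
  then show ?thesis unfolding child_def Let_def normalize_def rmove_def using c by auto
qed

definition wts :: "nat list \<Rightarrow> (nat\<Rightarrow>nat) \<Rightarrow> (nat\<Rightarrow>nat) \<Rightarrow> nat list" where
  "wts mu sh t = map (\<lambda>j. t j - sh j) [2..<Suc (length mu)]"

lemma wts_gen:
  assumes "2 \<le> c" "c \<le> l" "\<forall>j. 2 \<le> j \<and> j < c \<longrightarrow> t j - sh j = 0"
  shows "map (\<lambda>j. t j - sh j) [2..<Suc l] = replicate (c-2) 0 @ (t c - sh c) # map (\<lambda>j. t j - sh j) [Suc c..<Suc l]"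
proof -
  have "2 \<le> c" using assms by simp
  then have "[2..<c + (Suc l - c)] = [2..<c] @ [c..<c + (Suc l - c)]" by (rule upt_add_eq_append)
  moreover have "c + (Suc l - c) = Suc l" using assms by auto
  ultimately have "[2..<Suc l] = [2..<c] @ [c..<Suc l]" by simp
  moreover have "[c..<Suc l] = c # [Suc c..<Suc l]" using assms by (simp add: upt_conv_Cons)
  moreover have "map (\<lambda>j. t j - sh j) [2..<c] = map (\<lambda>j. 0) [2..<c]" using assms(3) by (intro map_cong) auto
  ultimately show ?thesis by (simp add: map_replicate_const)
qed

lemma sum_upd2:
  fixes t :: "nat \<Rightarrow> nat"
  assumes "finite A" "a \<in> A" "b \<in> A" "a \<noteq> b"
  shows "sum (t(a := x, b := y)) A + t a + t b = sum t A + x + y"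
proof -
  define f where "f = t(a := x, b := y)"
  have fa: "f a = x" and fb: "f b = y" using assms unfolding f_def by auto
  have e: "\<forall>z\<in>A - {a} - {b}. f z = t z" unfolding f_def by auto
  have "sum f A = f a + sum f (A - {a})" using sum.remove[OF assms(1,2)] .
  also have "sum f (A - {a}) = f b + sum f (A - {a} - {b})" by (rule sum.remove) (use assms in auto)
  also have "sum f (A - {a} - {b}) = sum t (A - {a} - {b})" by (rule sum.cong[OF refl]) (use e in blast)
  finally have 1: "sum f A = x + (y + sum t (A - {a} - {b}))" unfolding fa fb .
  have "sum t A = t a + sum t (A - {a})" using sum.remove[OF assms(1,2)] .
  also have "sum t (A - {a}) = t b + sum t (A - {a} - {b})" by (rule sum.remove) (use assms in auto)
  finally show ?thesis using 1 unfolding f_def by simp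
qed

lemma sum_upd1:
  fixes t :: "nat \<Rightarrow> nat"
  assumes "finite A" "a \<in> A" "b \<notin> A"
  shows "sum (t(a := x, b := y)) A + t a = sum t A + x"
proof -
  define f where "f = t(a := x, b := y)"
  have fa: "f a = x" using assms unfolding f_def by auto
  have e: "\<forall>z\<in>A - {a}. f z = t z" using assms unfolding f_def by auto
  have "sum f A = f a + sum f (A - {a})" using sum.remove[OF assms(1,2)] .
  also have "sum f (A - {a}) = sum t (A - {a})" by (rule sum.cong[OF refl]) (use e in blast)
  finally have 1: "sum f A = x + sum t (A - {a})" unfolding fa .
  have "sum t A = t a + sum t (A - {a})" using sum.remove[OF assms(1,2)] .
  then show ?thesis using 1 unfolding f_def by simp
qed

lemma sum_upd0:
  fixes t :: "nat \<Rightarrow> nat"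
  assumes "a \<notin> A" "b \<notin> A"
  shows "sum (t(a := x, b := y)) A = sum t A"
  using assms by (intro sum.cong) auto

definition S1 :: "nat list \<Rightarrow> ((nat\<Rightarrow>nat) \<times> (nat\<Rightarrow>nat)) option \<Rightarrow> nat" where
  "S1 mu L = (case L of None \<Rightarrow> 0 | Some (sh, t) \<Rightarrow> (\<Sum>i\<in>{2..length mu}. \<Sum>i'\<in>{i..length mu}. t i'))"

definition S2 :: "nat list \<Rightarrow> ((nat\<Rightarrow>nat) \<times> (nat\<Rightarrow>nat)) option \<Rightarrow> nat" where
  "S2 mu L = (case L of None \<Rightarrow> 0 | Some (sh, t) \<Rightarrow> (\<Sum>i\<in>{2..length mu}. t i - sh i))"

lemma S1_F:
  assumes "2 \<le> c" "c \<le> length mu" "sh c < t c"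
  shows "S1 mu (Some (sh', t(c := sh c, c - 1 := t (c-1) + (t c - sh c)))) < S1 mu (Some (sh, t))"
proof -
  let ?l = "length mu"
  let ?r = "t c - sh c"
  let ?t = "t(c := sh c, c - 1 := t (c-1) + ?r)"
  have pt: "(\<Sum>i'\<in>{i..?l}. ?t i') \<le> (\<Sum>i'\<in>{i..?l}. t i')" if "i \<in> {2..?l}" for i
  proof (cases "c < i")
    case True
    then have "c \<notin> {i..?l}" "c - 1 \<notin> {i..?l}" by auto
    then show ?thesis using sum_upd0[of c "{i..?l}" "c-1" t] by simp
  next
    case False
    show ?thesis
    proof (cases "i = c")
      case True
      then have "sum ?t {i..?l} + t c = sum t {i..?l} + sh c"
        by (intro sum_upd1) (use assms in auto)
      then show ?thesis using assms by simp
    next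
      case False
      then have "sum ?t {i..?l} + t c + t (c-1) = sum t {i..?l} + sh c + (t (c-1) + ?r)"
        by (intro sum_upd2) (use assms \<open>\<not> c < i\<close> that in auto)
      then show ?thesis using assms by simp
    qed
  qed
  have st: "(\<Sum>i'\<in>{c..?l}. ?t i') < (\<Sum>i'\<in>{c..?l}. t i')"
  proof -
    have "sum ?t {c..?l} + t c = sum t {c..?l} + sh c"
      by (intro sum_upd1) (use assms in auto)
    then show ?thesis using assms by simp
  qed
  have "(\<Sum>i\<in>{2..?l}. \<Sum>i'\<in>{i..?l}. ?t i') < (\<Sum>i\<in>{2..?l}. \<Sum>i'\<in>{i..?l}. t i')"
    by (rule sum_strict_mono_ex1) (use pt st assms in auto)
  then show ?thesis unfolding S1_def by simp
qed



definition InvL :: "nat list \<Rightarrow> label \<Rightarrow> bool" where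
  "InvL mu L = (case L of None \<Rightarrow> True | Some (sh, t) \<Rightarrow> Inv mu sh t)"

definition compL :: "nat list \<Rightarrow> (nat\<Rightarrow>nat) \<Rightarrow> label \<Rightarrow> (nat\<Rightarrow>nat) list set" where
  "compL mu P L = (case L of None \<Rightarrow> {} | Some (sh, t) \<Rightarrow> Ch P sh 2 (wts mu sh t))"

lemma setup_c:
  assumes inv: "Inv mu sh t" and hc: "has_c mu sh t" and c: "c = min_c mu sh t"
  shows "2 \<le> c" "c \<le> length mu" "sh c < t c" "\<forall>j. 2 \<le> j \<and> j < c \<longrightarrow> sh j = t j"
    "wts mu sh t = replicate (c-2) 0 @ (t c - sh c) # map (\<lambda>j. t j - sh j) [Suc c..<Suc (length mu)]"
proof -
  show c2: "2 \<le> c" and cl: "c \<le> length mu" and "sh c < t c" using minc[OF hc] c by auto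
  show eqb: "\<forall>j. 2 \<le> j \<and> j < c \<longrightarrow> sh j = t j"
  proof (intro allI impI)
    fix j assume j: "2 \<le> j \<and> j < c"
    then have "\<not> sh j < t j" using minc(4)[OF hc, of j] c cl by auto
    moreover have "sh j \<le> t j" using inv j cl unfolding Inv_def by auto
    ultimately show "sh j = t j" by auto
  qed
  show "wts mu sh t = replicate (c-2) 0 @ (t c - sh c) # map (\<lambda>j. t j - sh j) [Suc c..<Suc (length mu)]"
    unfolding wts_def by (rule wts_gen) (use c2 cl eqb in auto)
qed

lemma step_card:
  assumes inv: "Inv mu sh t" and hc: "has_c mu sh t"
  shows "card (compL mu P (Some (sh,t))) = card (compL mu P (child mu (Some (sh,t)) False))
            + card (compL mu P (child mu (Some (sh,t)) True))"
proof -
  define c where "c = min_c mu sh t"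
  define l where "l = length mu"
  define r where "r = t c - sh c"
  define ws where "ws = map (\<lambda>j. t j - sh j) [Suc c..<Suc l]"
  note S = setup_c[OF inv hc c_def]
  have c2: "2 \<le> c" and cl: "c \<le> l" and lt: "sh c < t c" and eqb: "\<forall>j. 2 \<le> j \<and> j < c \<longrightarrow> sh j = t j"
    and w0: "wts mu sh t = replicate (c-2) 0 @ r # ws" using S unfolding l_def r_def ws_def by auto
  have pf: "is_part_fun sh" and s1: "sh 1 = t 1" using inv unfolding Inv_def by auto
  have r0: "0 < r" using lt unfolding r_def by auto
  have "card (compL mu P (Some (sh,t))) = card (Ch P sh (2 + length (replicate (c-2) (0::nat))) (r#ws))"
    unfolding compL_def using w0 card_Ch_zeros[OF pf, of "replicate (c-2) 0"] by simp
  also have "2 + length (replicate (c-2) (0::nat)) = c" using c2 by simp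
  finally have L: "card (compL mu P (Some (sh,t))) = card (Ch P sh c (r#ws))" .
  note split = card_Ch_split[OF pf c2 r0, of P ws]
  have T: "card (compL mu P (child mu (Some (sh,t)) True)) =
      (if sh c + 1 \<le> sh (c-1) then card (Ch P (sh(c := sh c + 1)) c ((r-1)#ws)) else 0)"
  proof (cases "sh c + 1 \<le> sh (c-1)")
    case True
    define s' where "s' = sh(c := sh c + 1)"
    have ch: "child mu (Some (sh,t)) True = Some (s', t)" using child_T[OF inv hc c_def] True s'_def by simp
    have ps: "is_part_fun s'" using part_upd_iff[OF pf c2] True s'_def by simp
    have tail: "map (\<lambda>j. t j - s' j) [Suc c..<Suc l] = ws" unfolding ws_def s'_def by (intro map_cong) (use c2 in auto)
    have "wts mu s' t = replicate (c-2) 0 @ (t c - s' c) # map (\<lambda>j. t j - s' j) [Suc c..<Suc l]"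
      unfolding wts_def l_def by (rule wts_gen) (use c2 cl eqb in \<open>auto simp: l_def s'_def\<close>)
    also have "\<dots> = replicate (c-2) 0 @ (r-1) # ws" using tail unfolding r_def s'_def by simp
    finally have w: "wts mu s' t = replicate (c-2) 0 @ (r-1) # ws" .
    have "card (compL mu P (Some (s', t))) = card (Ch P s' (2 + length (replicate (c-2) (0::nat))) ((r-1)#ws))"
      unfolding compL_def using w card_Ch_zeros[OF ps, of "replicate (c-2) 0"] by (simp del: Ch.simps)
    also have "2 + length (replicate (c-2) (0::nat)) = c" using c2 by simp
    finally have X: "card (compL mu P (Some (s', t))) = card (Ch P s' c ((r-1)#ws))" .
    show ?thesis by (simp only: ch s'_def[symmetric] X if_P[OF True])
  next
    case False
    then show ?thesis using child_T[OF inv hc c_def] by (simp add: compL_def)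
  qed
  let ?rm = "t(c := sh c, c - 1 := t (c-1) + r)"
  have chF: "child mu (Some (sh,t)) False = Some (sh(1 := ?rm 1), ?rm)"
    using child_F[OF inv hc c_def] unfolding r_def by simp
  have F: "card (compL mu P (child mu (Some (sh,t)) False)) = card (Ch P sh (c-1) (r#0#ws))"
  proof (cases "c = 2")
    case True
    define s' where "s' = sh(1 := t 1 + r)"
    have rm1: "?rm 1 = t 1 + r" using True by simp
    have ps: "is_part_fun s'" unfolding is_part_fun_def
    proof (intro allI impI)
      fix i :: nat assume i: "1 \<le> i"
      have p: "sh (Suc i) \<le> sh i" using pf i unfolding is_part_fun_def by auto
      show "s' (Suc i) \<le> s' i"
      proof (cases "i = 1")
        case True then show ?thesis using p s1 unfolding s'_def by auto
      next
        case False then show ?thesis using p i unfolding s'_def by auto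
      qed
    qed
    have tail: "map (\<lambda>j. ?rm j - s' j) [Suc c..<Suc l] = ws" unfolding ws_def s'_def by (intro map_cong) (use c2 in auto)
    have "wts mu s' ?rm = replicate (c-2) 0 @ (?rm c - s' c) # map (\<lambda>j. ?rm j - s' j) [Suc c..<Suc l]"
      unfolding wts_def l_def by (rule wts_gen) (use c2 cl True in \<open>auto simp: l_def s'_def\<close>)
    also have "\<dots> = [0] @ ws" using tail True s'_def by simp
    finally have w: "wts mu s' ?rm = [0] @ ws" .
    have "card (compL mu P (Some (s', ?rm))) = card (Ch P s' (2 + length [0::nat]) ws)"
      unfolding compL_def using w card_Ch_zeros[OF ps, of "[0]"] by (simp del: Ch.simps)
    also have "\<dots> = card (Ch P (sh(1 := sh 1 + r)) 3 ws)" using s1 s'_def by (simp add: numeral_3_eq_3 del: Ch.simps)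
    also have "\<dots> = card (Ch P sh 1 (r#0#ws))" using card_Ch_one[OF pf] by simp
    finally have X: "card (compL mu P (Some (s', ?rm))) = card (Ch P sh 1 (r#0#ws))" .
    have c1: "c - 1 = 1" using True by simp
    have chF2: "child mu (Some (sh,t)) False = Some (s', ?rm)" using chF rm1 unfolding s'_def by simp
    show ?thesis unfolding chF2 X unfolding c1 by (rule refl)
  next
    case False
    then have c3: "3 \<le> c" using c2 by auto
    have "c - 1 \<noteq> 1" "c \<noteq> 1" "c \<noteq> c - 1" using c3 by auto
    then have rm1: "?rm 1 = t 1" by simp
    have shs: "sh(1 := t 1) = sh" using s1 by (auto simp: fun_eq_iff)
    have upt: "[Suc (c-1)..<Suc l] = c # [Suc c..<Suc l]" using c3 cl by (simp add: upt_conv_Cons)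
    have tail: "map (\<lambda>j. ?rm j - sh j) [Suc c..<Suc l] = ws" unfolding ws_def by (intro map_cong) (use c2 in auto)
    have e2: "sh (c-1) = t (c-1)" using eqb c3 by auto
    have "wts mu sh ?rm = replicate (c-1-2) 0 @ (?rm (c-1) - sh (c-1)) # map (\<lambda>j. ?rm j - sh j) [Suc (c-1)..<Suc l]"
      unfolding wts_def l_def by (rule wts_gen) (use c3 cl eqb in \<open>auto simp: l_def\<close>)
    also have "\<dots> = replicate (c-1-2) 0 @ r # 0 # ws" using tail e2 upt c3 \<open>c - 1 \<noteq> 1\<close> by (simp del: upt_Suc) (use c3 in linarith)
    finally have w: "wts mu sh ?rm = replicate (c-1-2) 0 @ r # 0 # ws" .
    have "card (compL mu P (Some (sh, ?rm))) = card (Ch P sh (2 + length (replicate (c-1-2) (0::nat))) (r#0#ws))"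
      unfolding compL_def using w card_Ch_zeros[OF pf, of "replicate (c-1-2) 0"] by simp
    also have "2 + length (replicate (c-1-2) (0::nat)) = c - 1" using c3 by simp
    finally have X: "card (compL mu P (Some (sh, ?rm))) = card (Ch P sh (c - 1) (r#0#ws))" .
    show ?thesis unfolding chF rm1 shs X by (rule refl)
  qed
  show ?thesis using L split T F by (simp del: Ch.simps)
qed



lemma step_inv:
  assumes inv: "Inv mu sh t" and hc: "has_c mu sh t"
  shows "InvL mu (child mu (Some (sh,t)) b)"
proof -
  define c where "c = min_c mu sh t"
  note S = setup_c[OF inv hc c_def]
  have c2: "2 \<le> c" and cl: "c \<le> length mu" and lt: "sh c < t c" and eqb: "\<forall>j. 2 \<le> j \<and> j < c \<longrightarrow> sh j = t j"
    using S by auto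
  have pf: "is_part_fun sh" and s1: "sh 1 = t 1" and le: "\<forall>j. 2 \<le> j \<and> j \<le> length mu \<longrightarrow> sh j \<le> t j"
    and z: "\<forall>j. (j = 0 \<or> length mu < j) \<longrightarrow> sh j = 0 \<and> t j = 0" using inv unfolding Inv_def by auto
  show ?thesis
  proof (cases b)
    case True
    show ?thesis
    proof (cases "sh c + 1 \<le> sh (c-1)")
      case True
      let ?s = "sh(c := sh c + 1)"
      have "child mu (Some (sh,t)) b = Some (?s, t)" using child_T[OF inv hc c_def] True \<open>b\<close> by simp
      moreover have "Inv mu ?s t" unfolding Inv_def
      proof (intro conjI allI impI)
        show "is_part_fun ?s" using part_upd_iff[OF pf c2] True by simp
        have ne: "(1::nat) \<noteq> c" using c2 by simp
        show "?s 1 = t 1" using s1 fun_upd_other[OF ne, of sh "sh c + 1"] by simp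
      next
        fix j assume "2 \<le> j \<and> j \<le> length mu" then show "?s j \<le> t j" using le lt by auto
      next
        fix j assume "j = 0 \<or> length mu < j" then show "?s j = 0" "t j = 0" using z c2 cl by auto
      qed
      ultimately show ?thesis unfolding InvL_def by simp
    next
      case False
      then show ?thesis using child_T[OF inv hc c_def] \<open>b\<close> unfolding InvL_def by simp
    qed
  next
    case False
    let ?r = "t c - sh c"
    let ?rm = "t(c := sh c, c - 1 := t (c-1) + ?r)"
    let ?s = "sh(1 := ?rm 1)"
    have ch: "child mu (Some (sh,t)) b = Some (?s, ?rm)" using child_F[OF inv hc c_def] False by simp
    have rm1: "t 1 \<le> ?rm 1" using c2 by simp
    have "Inv mu ?s ?rm" unfolding Inv_def
    proof (intro conjI allI impI)
      show "is_part_fun ?s" unfolding is_part_fun_def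
      proof (intro allI impI)
        fix i :: nat assume i: "1 \<le> i"
        have p: "sh (Suc i) \<le> sh i" using pf i unfolding is_part_fun_def by auto
        show "?s (Suc i) \<le> ?s i"
        proof (cases "i = 1")
          case True
          have a: "?s (Suc i) = sh (Suc i)" using True by simp
          have b: "?s i = ?rm 1" using True by simp
          have "sh (Suc i) \<le> t 1" using p s1 True by simp
          then show ?thesis unfolding a b using rm1 by (rule order_trans)
        next
          case False then show ?thesis using p i by simp
        qed
      qed
      show "?s 1 = ?rm 1" by simp
    next
      fix j assume j: "2 \<le> j \<and> j \<le> length mu"
      show "?s j \<le> ?rm j"
      proof -
        have "?s j = sh j" using j by simp
        moreover have "sh j \<le> ?rm j" using le j by auto
        ultimately show ?thesis by simp
      qed
    next
      fix j assume "j = 0 \<or> length mu < j" then show "?s j = 0" "?rm j = 0" using z c2 cl by auto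
    qed
    then show ?thesis using ch unfolding InvL_def by simp
  qed
qed

lemma step_measure:
  assumes inv: "Inv mu sh t" and hc: "has_c mu sh t"
  shows "(child mu (Some (sh,t)) b, Some (sh,t)) \<in> measures [S1 mu, S2 mu]"
proof -
  define c where "c = min_c mu sh t"
  note S = setup_c[OF inv hc c_def]
  have c2: "2 \<le> c" and cl: "c \<le> length mu" and lt: "sh c < t c"
    using S by auto
  show ?thesis
  proof (cases b)
    case False
    then have "child mu (Some (sh,t)) b = Some (sh(1 := (t(c := sh c, c - 1 := t (c-1) + (t c - sh c))) 1),
       t(c := sh c, c - 1 := t (c-1) + (t c - sh c)))" using child_F[OF inv hc c_def] by simp
    then show ?thesis using S1_F[of c mu sh t, OF c2 cl lt] by simp
  next
    case True
    show ?thesis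
    proof (cases "sh c + 1 \<le> sh (c-1)")
      case True
      let ?s = "sh(c := sh c + 1)"
      have ch: "child mu (Some (sh,t)) b = Some (?s, t)" using child_T[OF inv hc c_def] True \<open>b\<close> by simp
      have "(\<Sum>i\<in>{2..length mu}. t i - ?s i) < (\<Sum>i\<in>{2..length mu}. t i - sh i)"
        by (rule sum_strict_mono_ex1) (use c2 cl lt in auto)
      then show ?thesis unfolding ch by (simp add: S1_def S2_def)
    next
      case False
      then have ch: "child mu (Some (sh,t)) b = None" using child_T[OF inv hc c_def] \<open>b\<close> by simp
      have "0 < t c" using lt by simp
      also have "t c \<le> (\<Sum>i'\<in>{c..length mu}. t i')" by (rule member_le_sum) (use cl in auto)
      also have "\<dots> \<le> (\<Sum>i\<in>{2..length mu}. \<Sum>i'\<in>{i..length mu}. t i')"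
        by (rule member_le_sum[of c "{2..length mu}" "\<lambda>i. \<Sum>i'\<in>{i..length mu}. t i'"]) (use c2 cl in auto)
      finally show ?thesis unfolding ch by (simp add: S1_def)
    qed
  qed
qed



definition TLs :: "nat list \<Rightarrow> (nat\<Rightarrow>nat) \<Rightarrow> label \<Rightarrow> bool list set" where
  "TLs mu P L = {p. (\<forall>k<length p. internal_label mu (foldl (child mu) L (take k p))) \<and> foldl (child mu) L p = Some (P,P)}"

lemma target_not_internal: "\<not> internal_label mu (Some (P,P))"
  unfolding internal_label_def has_c_def by auto

lemma TLs_internal:
  assumes "internal_label mu L"
  shows "TLs mu P L = (\<lambda>q. False#q) ` TLs mu P (child mu L False) \<union> (\<lambda>q. True#q) ` TLs mu P (child mu L True)"
proof -
  have ne: "L \<noteq> Some (P,P)" using assms target_not_internal by metis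
  have cons: "b#q \<in> TLs mu P L \<longleftrightarrow> q \<in> TLs mu P (child mu L b)" for b q
    unfolding TLs_def using assms by (simp add: All_less_Suc2)
  show ?thesis
  proof (intro set_eqI iffI)
    fix p assume p: "p \<in> TLs mu P L"
    then obtain b q where "p = b#q" using ne unfolding TLs_def by (cases p) auto
    then show "p \<in> (\<lambda>q. False#q) ` TLs mu P (child mu L False) \<union> (\<lambda>q. True#q) ` TLs mu P (child mu L True)"
      using p cons by (cases b) auto
  next
    fix p assume "p \<in> (\<lambda>q. False#q) ` TLs mu P (child mu L False) \<union> (\<lambda>q. True#q) ` TLs mu P (child mu L True)"
    then show "p \<in> TLs mu P L" using cons by auto
  qed
qed

lemma TLs_not_internal:
  assumes "\<not> internal_label mu L"
  shows "TLs mu P L = (if L = Some (P,P) then {[]} else {})"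
proof (intro set_eqI iffI)
  fix p :: "bool list" assume p: "p \<in> TLs mu P L"
  show "p \<in> (if L = Some (P,P) then {[]} else {})"
  proof (cases p)
    case Nil then show ?thesis using p unfolding TLs_def by auto
  next
    case (Cons b q)
    then have "internal_label mu (foldl (child mu) L (take 0 p))" using p unfolding TLs_def by auto
    then show ?thesis using assms by simp
  qed
next
  fix p :: "bool list" assume "p \<in> (if L = Some (P,P) then {[]} else {})"
  then show "p \<in> TLs mu P L" unfolding TLs_def by (auto split: if_splits)
qed

lemma terminal_eq:
  assumes "Inv mu sh t" "\<not> has_c mu sh t"
  shows "sh = t"
proof
  fix j
  show "sh j = t j"
  proof (cases "j = 0 \<or> length mu < j")
    case True then show ?thesis using assms(1) unfolding Inv_def by auto
  next
    case False
    show ?thesis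
    proof (cases "j = 1")
      case True then show ?thesis using assms(1) unfolding Inv_def by auto
    next
      case False
      then have "2 \<le> j" "j \<le> length mu" using \<open>\<not> (j = 0 \<or> length mu < j)\<close> by auto
      then show ?thesis using assms unfolding Inv_def has_c_def by (metis Suc_1 Suc_le_lessD le_antisym not_le)
    qed
  qed
qed

lemma tree_main:
  "InvL mu L \<Longrightarrow> finite (TLs mu P L) \<and> card (TLs mu P L) = card (compL mu P L)"
proof (induction L rule: wf_induct[OF wf_measures[of "[S1 mu, S2 mu]"]])
  case (1 L)
  show ?case
  proof (cases L)
    case None
    then have "\<not> internal_label mu L" unfolding internal_label_def by simp
    then show ?thesis using None TLs_not_internal by (simp add: compL_def)
  next
    case (Some a)
    then obtain sh t where L: "L = Some (sh,t)" by (cases a) auto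
    then have inv: "Inv mu sh t" using 1(2) unfolding InvL_def by simp
    show ?thesis
    proof (cases "has_c mu sh t")
      case True
      then have int: "internal_label mu L" unfolding internal_label_def L by simp
      have IH: "finite (TLs mu P (child mu L b)) \<and> card (TLs mu P (child mu L b)) = card (compL mu P (child mu L b))" for b
        using 1(1) step_measure[OF inv True, of b] step_inv[OF inv True, of b] unfolding L by blast
      have eq: "TLs mu P L = (\<lambda>q. False#q) ` TLs mu P (child mu L False) \<union> (\<lambda>q. True#q) ` TLs mu P (child mu L True)"
        using TLs_internal[OF int] .
      have fin: "finite (TLs mu P L)" unfolding eq using IH by blast
      have "card (TLs mu P L) = card ((\<lambda>q. False#q) ` TLs mu P (child mu L False)) + card ((\<lambda>q. True#q) ` TLs mu P (child mu L True))"
        unfolding eq by (rule card_Un_disjoint) (use IH in auto)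
      also have "\<dots> = card (TLs mu P (child mu L False)) + card (TLs mu P (child mu L True))"
        by (simp add: card_image)
      also have "\<dots> = card (compL mu P L)" using IH step_card[OF inv True, of P] unfolding L by simp
      finally show ?thesis using fin by simp
    next
      case False
      then have ni: "\<not> internal_label mu L" unfolding internal_label_def L by simp
      have st: "sh = t" using terminal_eq[OF inv False] .
      have pf: "is_part_fun sh" using inv unfolding Inv_def by simp
      have w: "wts mu sh t = replicate (length mu - 1) 0 @ []" unfolding wts_def st
        by (simp add: map_replicate_const) linarith
      have "card (compL mu P L) = card (Ch P sh (2 + length (replicate (length mu - 1) (0::nat))) [])"
        unfolding compL_def L using w card_Ch_zeros[OF pf, of "replicate (length mu - 1) 0" P 2 "[]"]
        by (simp del: Ch.simps)
      also have "\<dots> = (if sh = P then 1 else 0)" by simp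
      finally show ?thesis using TLs_not_internal[OF ni] st L by auto
    qed
  qed
qed



lemma Ch_iff:
  "ch \<in> Ch P v j ws \<longleftrightarrow> length ch = length ws \<and> (\<forall>k<length ws. Rs (j+k) ((v#ch)!k) (ws!k) (ch!k)) \<and> last (v#ch) = P"
proof (induction ws arbitrary: v j ch)
  case Nil then show ?case by auto
next
  case (Cons w ws)
  show ?case
  proof (cases ch)
    case Nil then show ?thesis by simp
  next
    case (Cons v' rest)
    have "ch \<in> Ch P v j (w#ws) \<longleftrightarrow> Rs j v w v' \<and> rest \<in> Ch P v' (Suc j) ws" using Cons by auto
    also have "\<dots> \<longleftrightarrow> Rs j v w v' \<and> length rest = length ws \<and> (\<forall>k<length ws. Rs (Suc j+k) ((v'#rest)!k) (ws!k) (rest!k)) \<and> last (v'#rest) = P"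
      using Cons.IH by simp
    also have "\<dots> \<longleftrightarrow> length ch = length (w#ws) \<and> (\<forall>k<length (w#ws). Rs (j+k) ((v#ch)!k) ((w#ws)!k) (ch!k)) \<and> last (v#ch) = P"
      using Cons by (auto simp add: All_less_Suc2)
    finally show ?thesis .
  qed
qed

definition NN :: "nat list \<Rightarrow> (nat \<Rightarrow> nat \<Rightarrow> nat) \<Rightarrow> nat \<Rightarrow> nat \<Rightarrow> nat" where
  "NN tau T k i = card {j. (i,j) \<in> cells tau \<and> T i j \<le> k}"

definition sh0 :: "nat list \<Rightarrow> nat \<Rightarrow> nat" where
  "sh0 mu = (pad (take 1 mu))(1 := pad mu 1)"

lemma sh0_ge2: "2 \<le> i \<Longrightarrow> sh0 mu i = 0"
  unfolding sh0_def pad_def by auto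

lemma sh0_0: "sh0 mu 0 = 0"
  unfolding sh0_def pad_def by auto

lemma cells_iff: "(i,j) \<in> cells tau \<longleftrightarrow> 1 \<le> i \<and> 1 \<le> j \<and> j \<le> pad tau i"
  unfolding cells_def pad_def by auto

lemma pad_0: "pad tau 0 = 0" unfolding pad_def by auto

lemma pad_mono:
  assumes "sorted_wrt (\<ge>) tau" "1 \<le> i" "i \<le> i'"
  shows "pad tau i' \<le> pad tau i"
proof (cases "i' \<le> length tau")
  case True
  show ?thesis
  proof (cases "i = i'")
    case False
    then have "tau ! (i'-1) \<le> tau ! (i-1)" using assms True unfolding sorted_wrt_iff_nth_less by auto
    then show ?thesis using assms True unfolding pad_def by auto
  qed simp
next
  case False then show ?thesis unfolding pad_def by auto
qed

lemma finite_cells: "finite (cells tau)"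
proof -
  have "cells tau \<subseteq> {0..length tau} \<times> {0..sum_list tau}"
  proof
    fix x assume "x \<in> cells tau"
    then obtain i j where x: "x = (i,j)" "1 \<le> i" "i \<le> length tau" "j \<le> tau ! (i-1)" unfolding cells_def by auto
    then have "tau ! (i-1) \<le> sum_list tau" by (intro elem_le_sum_list) auto
    then show "x \<in> {0..length tau} \<times> {0..sum_list tau}" using x by auto
  qed
  then show ?thesis by (rule finite_subset) auto
qed

lemma finite_row: "finite {j. (i,j) \<in> cells tau \<and> Q j}"
proof -
  have "{j. (i,j) \<in> cells tau \<and> Q j} \<subseteq> {..pad tau i}" using cells_iff by auto
  then show ?thesis by (rule finite_subset) auto
qed

locale TT =
  fixes tau mu :: "nat list"
  assumes srt: "sorted_wrt (\<ge>) tau"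
begin

abbreviation "P \<equiv> pad tau"
abbreviation "l \<equiv> length mu"

lemma cell_left: "(i,j') \<in> cells tau \<Longrightarrow> 1 \<le> j \<Longrightarrow> j \<le> j' \<Longrightarrow> (i,j) \<in> cells tau"
  using cells_iff by auto

lemma cell_up: "(Suc i,j) \<in> cells tau \<Longrightarrow> 1 \<le> i \<Longrightarrow> (i,j) \<in> cells tau"
  using cells_iff pad_mono[OF srt, of i "Suc i"] by auto

context
  fixes T assumes TS: "T \<in> SStd tau mu"
begin

lemma T_out: "(i,j) \<notin> cells tau \<Longrightarrow> T i j = 0" using TS unfolding SStd_def by auto
lemma T_pos: "(i,j) \<in> cells tau \<Longrightarrow> 1 \<le> T i j" using TS unfolding SStd_def by auto
lemma T_cont: "1 \<le> k \<Longrightarrow> card {(i, j) \<in> cells tau. T i j = k} = pad mu k" using TS unfolding SStd_def by auto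
lemma T_row: "(i,j) \<in> cells tau \<Longrightarrow> (i, Suc j) \<in> cells tau \<Longrightarrow> T i j \<le> T i (Suc j)" using TS unfolding SStd_def by auto
lemma T_col: "(i,j) \<in> cells tau \<Longrightarrow> (Suc i, j) \<in> cells tau \<Longrightarrow> T i j < T (Suc i) j" using TS unfolding SStd_def by auto

lemma T_rowmono:
  assumes "(i,j) \<in> cells tau" "(i,j') \<in> cells tau" "j \<le> j'"
  shows "T i j \<le> T i j'"
proof -
  have j1: "1 \<le> j" using assms(1) cells_iff by auto
  have "\<forall>n. j \<le> n \<longrightarrow> (i,n) \<in> cells tau \<longrightarrow> T i j \<le> T i n"
  proof (intro allI)
    fix n show "j \<le> n \<longrightarrow> (i,n) \<in> cells tau \<longrightarrow> T i j \<le> T i n"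
    proof (induction n)
      case 0 then show ?case by simp
    next
      case (Suc n)
      show ?case
      proof (intro impI)
        assume a: "j \<le> Suc n" "(i, Suc n) \<in> cells tau"
        show "T i j \<le> T i (Suc n)"
        proof (cases "j = Suc n")
          case True then show ?thesis by simp
        next
          case False
          then have jn: "j \<le> n" using a by simp
          then have cn: "(i,n) \<in> cells tau" using cell_left[OF a(2), of n] j1 by simp
          then have "T i j \<le> T i n" using Suc.IH jn by simp
          also have "T i n \<le> T i (Suc n)" using T_row[OF cn a(2)] .
          finally show ?thesis .
        qed
      qed
    qed
  qed
  then show ?thesis using assms by blast
qed

lemma T_ge_row: "(i,j) \<in> cells tau \<Longrightarrow> i \<le> T i j"
proof (induction i arbitrary: j)
  case 0 then show ?case by simp
next
  case (Suc i)
  show ?case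
  proof (cases "i = 0")
    case True then show ?thesis using T_pos[OF Suc.prems] by simp
  next
    case False
    then have c: "(i,j) \<in> cells tau" using cell_up[OF Suc.prems] by simp
    then show ?thesis using Suc.IH[OF c] T_col[OF c Suc.prems] by simp
  qed
qed

lemma T_le_l: "(i,j) \<in> cells tau \<Longrightarrow> T i j \<le> l"
proof (rule ccontr)
  assume c: "(i,j) \<in> cells tau" and "\<not> T i j \<le> l"
  then have "pad mu (T i j) = 0" unfolding pad_def by auto
  moreover have "1 \<le> T i j" using T_pos[OF c] .
  ultimately have "card {(i', j') \<in> cells tau. T i' j' = T i j} = 0" using T_cont by simp
  moreover have "finite {(i', j') \<in> cells tau. T i' j' = T i j}" using finite_cells by (rule finite_subset[rotated]) auto
  ultimately show False using c by auto
qed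

lemma NN_iff:
  assumes c: "(i,j) \<in> cells tau"
  shows "T i j \<le> k \<longleftrightarrow> j \<le> NN tau T k i"
proof
  assume h: "T i j \<le> k"
  have "{1..j} \<subseteq> {j'. (i,j') \<in> cells tau \<and> T i j' \<le> k}"
  proof
    fix j' assume j': "j' \<in> {1..j}"
    then have c': "(i,j') \<in> cells tau" using cell_left[OF c] by auto
    then have "T i j' \<le> T i j" using T_rowmono[OF c' c] j' by auto
    then show "j' \<in> {j'. (i,j') \<in> cells tau \<and> T i j' \<le> k}" using c' h by auto
  qed
  then have "card {1..j} \<le> NN tau T k i" unfolding NN_def by (intro card_mono finite_row)
  then show "j \<le> NN tau T k i" by simp
next
  assume h: "j \<le> NN tau T k i"
  show "T i j \<le> k"
  proof (rule ccontr)
    assume "\<not> T i j \<le> k"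
    have "{j'. (i,j') \<in> cells tau \<and> T i j' \<le> k} \<subseteq> {1..<j}"
    proof
      fix j' assume j': "j' \<in> {j'. (i,j') \<in> cells tau \<and> T i j' \<le> k}"
      then have c': "(i,j') \<in> cells tau" and "T i j' \<le> k" by auto
      have "j' < j"
      proof (rule ccontr)
        assume "\<not> j' < j"
        then have "T i j \<le> T i j'" using T_rowmono[OF c c'] by auto
        then show False using \<open>T i j' \<le> k\<close> \<open>\<not> T i j \<le> k\<close> by auto
      qed
      then show "j' \<in> {1..<j}" using c' cells_iff by auto
    qed
    then have "NN tau T k i \<le> card {1..<j}" unfolding NN_def by (intro card_mono) auto
    then show False using h c cells_iff by auto
  qed
qed

lemma NN_0row: "NN tau T k 0 = 0"
  unfolding NN_def using cells_iff by simp

lemma NN_vanish: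
  assumes "k < i" shows "NN tau T k i = 0"
proof -
  have e: "{j. (i,j) \<in> cells tau \<and> T i j \<le> k} = {}"
  proof (intro set_eqI iffI)
    fix j assume "j \<in> {j. (i,j) \<in> cells tau \<and> T i j \<le> k}"
    then have "i \<le> T i j" "T i j \<le> k" using T_ge_row by auto
    then show "j \<in> {}" using assms by simp
  qed simp
  show ?thesis unfolding NN_def e by simp
qed

lemma NN_top: "l \<le> k \<Longrightarrow> NN tau T k = P"
proof
  fix i assume lk: "l \<le> k"
  show "NN tau T k i = P i"
  proof (cases "i = 0")
    case True then show ?thesis using NN_0row pad_0 by simp
  next
    case False
    have "{j. (i,j) \<in> cells tau \<and> T i j \<le> k} = {1..P i}"
    proof (intro set_eqI iffI)
      fix j assume "j \<in> {1..P i}"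
      then have c: "(i,j) \<in> cells tau" using False cells_iff by auto
      then have "T i j \<le> k" using T_le_l[OF c] lk by simp
      then show "j \<in> {j. (i,j) \<in> cells tau \<and> T i j \<le> k}" using c by simp
    qed (use cells_iff in auto)
    then show ?thesis unfolding NN_def by simp
  qed
qed

lemma NN_zero: "NN tau T 0 = (\<lambda>_. 0)"
proof
  fix i
  have e: "{j. (i,j) \<in> cells tau \<and> T i j \<le> 0} = {}"
  proof (intro set_eqI iffI)
    fix j assume "j \<in> {j. (i,j) \<in> cells tau \<and> T i j \<le> 0}"
    then have "(i,j) \<in> cells tau" "T i j \<le> 0" by auto
    then have "1 \<le> T i j" "T i j \<le> 0" using T_pos[of i j] by auto
    then show "j \<in> {}" by simp
  qed simp
  show "NN tau T 0 i = 0" unfolding NN_def e by simp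
qed

lemma NN_one: "NN tau T 1 = sh0 mu"
proof
  fix i
  show "NN tau T 1 i = sh0 mu i"
  proof (cases "i = 1")
    case True
    have "{(i, j) \<in> cells tau. T i j = 1} = (\<lambda>j. (1,j)) ` {j. (1,j) \<in> cells tau \<and> T 1 j \<le> 1}"
    proof (intro set_eqI iffI)
      fix x assume "x \<in> {(i, j) \<in> cells tau. T i j = 1}"
      then obtain a b where x: "x = (a,b)" "(a,b) \<in> cells tau" "T a b = 1" by auto
      then have "a \<le> 1" using T_ge_row by fastforce
      then have "a = 1" using x cells_iff by auto
      then show "x \<in> (\<lambda>j. (1,j)) ` {j. (1,j) \<in> cells tau \<and> T 1 j \<le> 1}" using x by auto
    next
      fix x :: "nat \<times> nat" assume "x \<in> (\<lambda>j. (1,j)) ` {j. (1,j) \<in> cells tau \<and> T 1 j \<le> 1}"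
      then obtain b where x: "x = (1,b)" "(1,b) \<in> cells tau" "T 1 b \<le> 1" by auto
      then show "x \<in> {(i, j) \<in> cells tau. T i j = 1}" using T_pos[OF x(2)] by auto
    qed
    then have "card {(i, j) \<in> cells tau. T i j = 1} = card {j. (1,j) \<in> cells tau \<and> T 1 j \<le> 1}"
      by (simp add: card_image inj_on_def)
    then show ?thesis using T_cont[of 1] True unfolding NN_def sh0_def by simp
  next
    case False
    show ?thesis
    proof (cases "i = 0")
      case True then show ?thesis using NN_0row sh0_0 by simp
    next
      case False
      then have "2 \<le> i" using \<open>i \<noteq> 1\<close> by auto
      then show ?thesis using NN_vanish[of 1 i] sh0_ge2 by simp
    qed
  qed
qed

end
end



context TT begin

lemma NN_Rs:
  assumes TS: "T \<in> SStd tau mu" and k1: "1 \<le> k"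
  shows "Rs k (NN tau T (k-1)) (pad mu k) (NN tau T k)"
  unfolding Rs_def
proof (intro conjI allI impI)
  fix i assume "i = 0 \<or> k < i"
  then show "NN tau T k i = NN tau T (k-1) i"
    using NN_0row[OF TS] NN_vanish[OF TS, of k i] NN_vanish[OF TS, of "k-1" i] by auto
next
  fix i assume "1 \<le> i \<and> i \<le> k"
  show "NN tau T (k-1) i \<le> NN tau T k i" unfolding NN_def by (intro card_mono finite_row) auto
next
  fix i assume i: "2 \<le> i \<and> i \<le> k"
  have "{j. (i,j) \<in> cells tau \<and> T i j \<le> k} \<subseteq> {j. (i-1,j) \<in> cells tau \<and> T (i-1) j \<le> k-1}"
  proof
    fix j assume j: "j \<in> {j. (i,j) \<in> cells tau \<and> T i j \<le> k}"
    have si: "Suc (i-1) = i" using i by simp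
    have c: "(Suc (i-1),j) \<in> cells tau" using j si by simp
    have i1: "1 \<le> i - 1" using i by arith
    have c': "(i-1,j) \<in> cells tau" using cell_up[OF c i1] .
    have "T (i-1) j < T (Suc (i-1)) j" using T_col[OF TS c' c] .
    then show "j \<in> {j. (i-1,j) \<in> cells tau \<and> T (i-1) j \<le> k-1}" using j si c' by auto
  qed
  then show "NN tau T k i \<le> NN tau T (k-1) (i-1)" unfolding NN_def by (intro card_mono finite_row)
next
  let ?A = "\<lambda>k i. {j. (i,j) \<in> cells tau \<and> T i j \<le> k}"
  have eq: "{(i, j) \<in> cells tau. T i j = k} = Sigma {1..k} (\<lambda>i. ?A k i - ?A (k-1) i)"
  proof (intro set_eqI iffI)
    fix x assume "x \<in> {(i, j) \<in> cells tau. T i j = k}"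
    then obtain i j where x: "x = (i,j)" "(i,j) \<in> cells tau" "T i j = k" by auto
    then have "i \<le> k" "1 \<le> i" using T_ge_row[OF TS x(2)] cells_iff by auto
    then show "x \<in> Sigma {1..k} (\<lambda>i. ?A k i - ?A (k-1) i)" using x k1 by auto
  next
    fix x assume "x \<in> Sigma {1..k} (\<lambda>i. ?A k i - ?A (k-1) i)"
    then show "x \<in> {(i, j) \<in> cells tau. T i j = k}" using k1 by auto
  qed
  have "(\<Sum>i=1..k. NN tau T k i - NN tau T (k-1) i) = (\<Sum>i=1..k. card (?A k i - ?A (k-1) i))"
  proof (rule sum.cong[OF refl])
    fix i assume "i \<in> {1..k}"
    have "?A (k-1) i \<subseteq> ?A k i" by auto
    then show "NN tau T k i - NN tau T (k-1) i = card (?A k i - ?A (k-1) i)"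
      unfolding NN_def by (simp add: card_Diff_subset finite_row)
  qed
  also have "\<dots> = card (Sigma {1..k} (\<lambda>i. ?A k i - ?A (k-1) i))"
    by (rule card_SigmaI[symmetric]) (auto intro: finite_Diff finite_row)
  also have "\<dots> = pad mu k" using eq T_cont[OF TS k1] by simp
  finally show "(\<Sum>i=1..k. NN tau T k i - NN tau T (k-1) i) = pad mu k" .
qed

lemma Phi_in:
  assumes TS: "T \<in> SStd tau mu"
  shows "map (NN tau T) [2..<Suc l] \<in> Ch P (sh0 mu) 2 (map (pad mu) [2..<Suc l])"
proof -
  let ?ch = "map (NN tau T) [2..<Suc l]"
  have nth: "(sh0 mu # ?ch) ! k = NN tau T (Suc k)" if "k \<le> length ?ch" for k
  proof (cases k)
    case 0 then show ?thesis using NN_one[OF TS] by simp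
  next
    case (Suc k') then show ?thesis using that by (simp add: nth_Cons' del: upt_Suc)
  qed
  have "\<forall>k<length (map (pad mu) [2..<Suc l]). Rs (2+k) ((sh0 mu # ?ch)!k) ((map (pad mu) [2..<Suc l])!k) (?ch!k)"
  proof (intro allI impI)
    fix k assume k: "k < length (map (pad mu) [2..<Suc l])"
    have "Rs (2+k) (NN tau T (2+k-1)) (pad mu (2+k)) (NN tau T (2+k))" using NN_Rs[OF TS, of "2+k"] by simp
    then show "Rs (2+k) ((sh0 mu # ?ch)!k) ((map (pad mu) [2..<Suc l])!k) (?ch!k)"
      using k nth[of k] by (simp add: numeral_2_eq_2 del: upt_Suc)
  qed
  moreover have "last (sh0 mu # ?ch) = P"
  proof -
    have "last (sh0 mu # ?ch) = (sh0 mu # ?ch) ! (length ?ch)" by (simp add: last_conv_nth)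
    also have "\<dots> = NN tau T (Suc (length ?ch))" using nth by simp
    also have "\<dots> = P" using NN_top[OF TS] by simp
    finally show ?thesis .
  qed
  ultimately show ?thesis unfolding Ch_iff by simp
qed

lemma Phi_inj:
  assumes TS: "T \<in> SStd tau mu" and TS': "T' \<in> SStd tau mu"
    and e: "map (NN tau T) [2..<Suc l] = map (NN tau T') [2..<Suc l]"
  shows "T = T'"
proof -
  have N: "NN tau T k = NN tau T' k" for k
  proof (cases "k \<le> 1")
    case True
    then have "k = 0 \<or> k = 1" by auto
    then show ?thesis using NN_zero[OF TS] NN_zero[OF TS'] NN_one[OF TS] NN_one[OF TS'] by auto
  next
    case False
    show ?thesis
    proof (cases "k \<le> l")
      case True
      have "map (NN tau T) [2..<Suc l] ! (k-2) = map (NN tau T') [2..<Suc l] ! (k-2)" by (simp only: e)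
      moreover have "Suc (Suc (k - 2)) = k" using False by simp
      ultimately show ?thesis using True False by (simp del: upt_Suc)
    next
      case False then show ?thesis using NN_top[OF TS] NN_top[OF TS'] by simp
    qed
  qed
  show ?thesis
  proof (intro ext)
    fix i j
    show "T i j = T' i j"
    proof (cases "(i,j) \<in> cells tau")
      case True
      have "j \<le> NN tau T' (T' i j) i" using NN_iff[OF TS' True, of "T' i j"] by simp
      then have "T i j \<le> T' i j" using NN_iff[OF TS True, of "T' i j"] N by simp
      moreover have "j \<le> NN tau T (T i j) i" using NN_iff[OF TS True, of "T i j"] by simp
      then have "T' i j \<le> T i j" using NN_iff[OF TS' True, of "T i j"] N by simp
      ultimately show ?thesis by simp
    next
      case False then show ?thesis using T_out[OF TS] T_out[OF TS'] by simp
    qed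
  qed
qed

end


definition Lam :: "nat list \<Rightarrow> nat list \<Rightarrow> (nat\<Rightarrow>nat) list \<Rightarrow> nat \<Rightarrow> nat \<Rightarrow> nat" where
  "Lam mu tau ch k = (if k = 0 then (\<lambda>_. 0) else if k \<le> Suc (length ch) then (sh0 mu # ch) ! (k-1) else pad tau)"

context TT begin

context
  fixes ch assumes CH: "ch \<in> Ch P (sh0 mu) 2 (map (pad mu) [2..<Suc l])"
begin

abbreviation "L \<equiv> Lam mu tau ch"
abbreviation "m \<equiv> Suc (length ch)"

lemma len_ch: "length ch = l - 1" using CH unfolding Ch_iff by (simp del: upt_Suc)

lemma L0: "L 0 = (\<lambda>_. 0)" unfolding Lam_def by simp
lemma L1: "L 1 = sh0 mu" unfolding Lam_def by simp

lemma Ltop: "m \<le> k \<Longrightarrow> L k = P"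
proof (cases "k = m")
  case True
  have "L k = (sh0 mu # ch) ! (length ch)" using True unfolding Lam_def by simp
  also have "\<dots> = last (sh0 mu # ch)" by (simp add: last_conv_nth)
  also have "\<dots> = P" using CH unfolding Ch_iff by simp
  finally show ?thesis .
next
  case False
  assume "m \<le> k" then show ?thesis using False unfolding Lam_def by simp
qed

lemma Lstep:
  assumes "1 \<le> k" "k < m"
  shows "Rs (Suc k) (L k) (pad mu (Suc k)) (L (Suc k))"
proof -
  have st: "\<forall>q<length (map (pad mu) [2..<Suc l]). Rs (2+q) ((sh0 mu # ch)!q) ((map (pad mu) [2..<Suc l])!q) (ch!q)"
    using CH unfolding Ch_iff by simp
  have q: "k - 1 < length (map (pad mu) [2..<Suc l])" using assms len_ch by (simp del: upt_Suc)
  have "Rs (2+(k-1)) ((sh0 mu # ch)!(k-1)) ((map (pad mu) [2..<Suc l])!(k-1)) (ch!(k-1))"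
    using st q by blast
  moreover have "2 + (k-1) = Suc k" using assms by simp
  moreover have "(map (pad mu) [2..<Suc l])!(k-1) = pad mu (Suc k)" using q assms by (simp del: upt_Suc)
  moreover have "(sh0 mu # ch)!(k-1) = L k" using assms unfolding Lam_def by simp
  moreover have "ch!(k-1) = L (Suc k)" using assms unfolding Lam_def by (simp add: nth_Cons')
  ultimately show ?thesis by simp
qed

lemma Lmono1: "L k i \<le> L (Suc k) i"
proof (cases "k = 0")
  case True then show ?thesis using L0 by simp
next
  case False
  show ?thesis
  proof (cases "k < m")
    case True
    have R: "Rs (Suc k) (L k) (pad mu (Suc k)) (L (Suc k))" using Lstep[OF _ True] False by simp
    show ?thesis
    proof (cases "i = 0 \<or> Suc k < i")
      case True then show ?thesis using R unfolding Rs_def by auto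
    next
      case False then show ?thesis using R unfolding Rs_def by auto
    qed
  next
    case False then show ?thesis using Ltop[of k] Ltop[of "Suc k"] by simp
  qed
qed

lemma Lmono: "k \<le> k' \<Longrightarrow> L k i \<le> L k' i"
  using lift_Suc_mono_le[of "\<lambda>k. L k i"] Lmono1 by blast

lemma Lrow0: "L k 0 = 0"
proof (induction k)
  case 0 then show ?case using L0 by simp
next
  case (Suc k)
  show ?case
  proof (cases "k = 0")
    case True then show ?thesis using L1 sh0_0 by simp
  next
    case False
    show ?thesis
    proof (cases "k < m")
      case True
      then have "Rs (Suc k) (L k) (pad mu (Suc k)) (L (Suc k))" using Lstep False by simp
      then show ?thesis using Suc unfolding Rs_def by auto
    next
      case False then show ?thesis using Ltop[of "Suc k"] pad_0 by simp
    qed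
  qed
qed

lemma Lvan: "k < i \<Longrightarrow> L k i = 0"
proof (induction k)
  case 0 then show ?case using L0 by simp
next
  case (Suc k)
  show ?case
  proof (cases "k = 0")
    case True then show ?thesis using L1 sh0_ge2[of i mu] Suc.prems by simp
  next
    case False
    show ?thesis
    proof (cases "k < m")
      case True
      then have "Rs (Suc k) (L k) (pad mu (Suc k)) (L (Suc k))" using Lstep False by simp
      then show ?thesis using Suc unfolding Rs_def by auto
    next
      case False then show ?thesis using Ltop[of "Suc k"] Ltop[of k] Suc by simp
    qed
  qed
qed

lemma LleP: "L k i \<le> P i"
proof -
  have "L k i \<le> L (max k m) i" by (rule Lmono) simp
  also have "L (max k m) = P" by (rule Ltop) simp
  finally show ?thesis .
qed

lemma Lcap:
  assumes "2 \<le> i" "1 \<le> k"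
  shows "L k i \<le> L (k-1) (i-1)"
proof (cases "k = 1")
  case True then show ?thesis using L1 sh0_ge2[OF assms(1)] by simp
next
  case False
  show ?thesis
  proof (cases "k - 1 < m")
    case True
    have R: "Rs (Suc (k-1)) (L (k-1)) (pad mu (Suc (k-1))) (L (Suc (k-1)))" using Lstep[OF _ True] False assms by simp
    have sk: "Suc (k-1) = k" using assms by simp
    show ?thesis
    proof (cases "i \<le> k")
      case True then show ?thesis using R sk assms unfolding Rs_def by auto
    next
      case False then show ?thesis using Lvan[of k i] by simp
    qed
  next
    case False
    then have "L k = P" "L (k-1) = P" using Ltop by auto
    then show ?thesis using pad_mono[OF srt, of "i-1" i] assms by simp
  qed
qed

lemma Lw:
  assumes "1 \<le> k"
  shows "(\<Sum>i=1..k. L k i - L (k-1) i) = pad mu k"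
proof (cases "k = 1")
  case True then show ?thesis using L1 L0 unfolding sh0_def by simp
next
  case False
  show ?thesis
  proof (cases "k - 1 < m")
    case True
    have R: "Rs (Suc (k-1)) (L (k-1)) (pad mu (Suc (k-1))) (L (Suc (k-1)))" using Lstep[OF _ True] False assms by simp
    have sk: "Suc (k-1) = k" using assms by simp
    show ?thesis using R unfolding sk Rs_def by simp
  next
    case False
    then have "L k = P" "L (k-1) = P" using Ltop by auto
    moreover have "pad mu k = 0" using False len_ch unfolding pad_def by auto
    ultimately show ?thesis by simp
  qed
qed

definition TT_of :: "nat \<Rightarrow> nat \<Rightarrow> nat" where
  "TT_of i j = (if (i,j) \<in> cells tau then (LEAST k. j \<le> L k i) else 0)"

lemma Tle:
  assumes c: "(i,j) \<in> cells tau"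
  shows "TT_of i j \<le> k \<longleftrightarrow> j \<le> L k i"
proof
  have ex: "j \<le> L m i" using Ltop[of m] c cells_iff by simp
  have T: "TT_of i j = (LEAST k. j \<le> L k i)" using c unfolding TT_of_def by simp
  assume "TT_of i j \<le> k"
  moreover have "j \<le> L (TT_of i j) i" unfolding T by (rule LeastI[of _ m]) (rule ex)
  ultimately show "j \<le> L k i" using Lmono by (meson le_trans)
next
  have T: "TT_of i j = (LEAST k. j \<le> L k i)" using c unfolding TT_of_def by simp
  assume "j \<le> L k i"
  then show "TT_of i j \<le> k" unfolding T by (rule Least_le)
qed

lemma TT_pos: "(i,j) \<in> cells tau \<Longrightarrow> 1 \<le> TT_of i j"
proof (rule ccontr)
  assume c: "(i,j) \<in> cells tau" and "\<not> 1 \<le> TT_of i j"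
  then have "TT_of i j \<le> 0" by simp
  then have "j \<le> L 0 i" using Tle[OF c] by simp
  then show False using c cells_iff L0 by simp
qed

lemma NN_TT: "NN tau TT_of k i = L k i"
proof (cases "i = 0")
  case True then show ?thesis unfolding NN_def using cells_iff Lrow0 by simp
next
  case False
  have "{j. (i,j) \<in> cells tau \<and> TT_of i j \<le> k} = {1..L k i}"
  proof (intro set_eqI iffI)
    fix j assume "j \<in> {j. (i,j) \<in> cells tau \<and> TT_of i j \<le> k}"
    then show "j \<in> {1..L k i}" using Tle cells_iff by auto
  next
    fix j assume j: "j \<in> {1..L k i}"
    then have c: "(i,j) \<in> cells tau" using False cells_iff LleP[of k i] by auto
    then show "j \<in> {j. (i,j) \<in> cells tau \<and> TT_of i j \<le> k}" using Tle[OF c] j by auto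
  qed
  then show ?thesis unfolding NN_def by simp
qed

lemma TT_SStd: "TT_of \<in> SStd tau mu"
  unfolding SStd_def
proof (intro CollectI conjI allI impI ballI)
  fix i j assume "(i,j) \<notin> cells tau" then show "TT_of i j = 0" unfolding TT_of_def by simp
next
  fix x assume "x \<in> cells tau" then show "case x of (i, j) \<Rightarrow> 1 \<le> TT_of i j" using TT_pos by auto
next
  fix k :: nat assume k1: "1 \<le> k"
  let ?S = "Sigma {1..k} (\<lambda>i. {L (k-1) i<..L k i})"
  have eq: "{(i, j) \<in> cells tau. TT_of i j = k} = ?S"
  proof (intro set_eqI iffI)
    fix x assume "x \<in> {(i, j) \<in> cells tau. TT_of i j = k}"
    then obtain i j where x: "x = (i,j)" "(i,j) \<in> cells tau" "TT_of i j = k" by auto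
    have a: "j \<le> L k i" using Tle[OF x(2), of k] x(3) by simp
    have nk: "\<not> k \<le> k - 1" using k1 by simp
    have b: "\<not> j \<le> L (k-1) i" using Tle[OF x(2), of "k-1"] x(3) nk by simp
    have "i \<le> k"
    proof (rule ccontr)
      assume "\<not> i \<le> k" then have "L k i = 0" using Lvan by simp
      then show False using a x(2) cells_iff by simp
    qed
    then show "x \<in> ?S" using x a b cells_iff by auto
  next
    fix x assume "x \<in> ?S"
    then obtain i j where x: "x = (i,j)" "1 \<le> i" "i \<le> k" "L (k-1) i < j" "j \<le> L k i" by auto
    have c: "(i,j) \<in> cells tau" using x cells_iff LleP[of k i] by auto
    have "TT_of i j \<le> k" using Tle[OF c] x by simp
    moreover have "\<not> TT_of i j \<le> k - 1" using Tle[OF c] x by simp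
    ultimately show "x \<in> {(i, j) \<in> cells tau. TT_of i j = k}" using x c k1 by auto
  qed
  have "card ?S = (\<Sum>i=1..k. L k i - L (k-1) i)" by (simp add: card_SigmaI)
  then show "card {(i, j) \<in> cells tau. TT_of i j = k} = pad mu k" using eq Lw[OF k1] by simp
next
  fix i j assume a: "(i, j) \<in> cells tau \<and> (i, Suc j) \<in> cells tau"
  then have "Suc j \<le> L (TT_of i (Suc j)) i" using Tle[of i "Suc j" "TT_of i (Suc j)"] by simp
  then have "j \<le> L (TT_of i (Suc j)) i" by simp
  then show "TT_of i j \<le> TT_of i (Suc j)" using Tle[of i j] a by simp
next
  fix i j assume a: "(i, j) \<in> cells tau \<and> (Suc i, j) \<in> cells tau"
  let ?k = "TT_of (Suc i) j"
  have k1: "1 \<le> ?k" using TT_pos a by simp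
  have i1: "1 \<le> i" using a cells_iff by simp
  have "j \<le> L ?k (Suc i)" using Tle[of "Suc i" j ?k] a by simp
  also have "\<dots> \<le> L (?k - 1) (Suc i - 1)" using Lcap[of "Suc i" ?k] i1 k1 by simp
  finally have "j \<le> L (?k - 1) i" by simp
  then have "TT_of i j \<le> ?k - 1" using Tle[of i j] a by simp
  then show "TT_of i j < ?k" using k1 by simp
qed

lemma TT_map: "map (NN tau TT_of) [2..<Suc l] = ch"
proof (rule nth_equalityI)
  show "length (map (NN tau TT_of) [2..<Suc l]) = length ch" using len_ch by (simp del: upt_Suc)
next
  fix q assume "q < length (map (NN tau TT_of) [2..<Suc l])"
  then have q: "q < length ch" using len_ch by (simp del: upt_Suc)
  have "map (NN tau TT_of) [2..<Suc l] ! q = NN tau TT_of (2+q)" using q len_ch by (simp del: upt_Suc)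
  also have "\<dots> = L (2+q)" using NN_TT by (simp add: fun_eq_iff)
  also have "\<dots> = ch ! q" using q unfolding Lam_def by simp
  finally show "map (NN tau TT_of) [2..<Suc l] ! q = ch ! q" .
qed

end
end


context TT begin

lemma SStd_bij: "bij_betw (\<lambda>T. map (NN tau T) [2..<Suc l]) (SStd tau mu) (Ch P (sh0 mu) 2 (map (pad mu) [2..<Suc l]))"
  unfolding bij_betw_def
proof (intro conjI)
  show "inj_on (\<lambda>T. map (NN tau T) [2..<Suc l]) (SStd tau mu)"
    by (rule inj_onI) (rule Phi_inj)
  show "(\<lambda>T. map (NN tau T) [2..<Suc l]) ` SStd tau mu = Ch P (sh0 mu) 2 (map (pad mu) [2..<Suc l])"
  proof
    show "(\<lambda>T. map (NN tau T) [2..<Suc l]) ` SStd tau mu \<subseteq> Ch P (sh0 mu) 2 (map (pad mu) [2..<Suc l])"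
      using Phi_in by auto
  next
    show "Ch P (sh0 mu) 2 (map (pad mu) [2..<Suc l]) \<subseteq> (\<lambda>T. map (NN tau T) [2..<Suc l]) ` SStd tau mu"
    proof
      fix ch assume CH: "ch \<in> Ch P (sh0 mu) 2 (map (pad mu) [2..<Suc l])"
      show "ch \<in> (\<lambda>T. map (NN tau T) [2..<Suc l]) ` SStd tau mu"
        using TT_SStd[OF CH] TT_map[OF CH] by (intro image_eqI[of _ _ "TT_of ch"]) auto
    qed
  qed
qed

end

lemma root_eq: "root_label mu = Some (sh0 mu, pad mu)"
  unfolding root_label_def normalize_def sh0_def by simp

lemma root_inv: "InvL mu (root_label mu)"
  unfolding root_eq InvL_def Inv_def
proof (simp only: option.case prod.case, intro conjI allI impI)
  show "is_part_fun (sh0 mu)" unfolding is_part_fun_def using sh0_ge2 by simp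
  show "sh0 mu 1 = pad mu 1" unfolding sh0_def by simp
next
  fix j :: nat assume "2 \<le> j \<and> j \<le> length mu" then show "sh0 mu j \<le> pad mu j" using sh0_ge2 by simp
next
  fix j :: nat assume j: "j = 0 \<or> length mu < j"
  show "pad mu j = 0" using j unfolding pad_def by auto
  show "sh0 mu j = 0"
  proof (cases "j = 1")
    case True then show ?thesis using j unfolding sh0_def pad_def by auto
  next
    case False then show ?thesis using j sh0_0 sh0_ge2[of j mu] by (cases "j = 0") auto
  qed
qed

lemma root_comp: "compL mu P (root_label mu) = Ch P (sh0 mu) 2 (map (pad mu) [2..<Suc (length mu)])"
proof -
  have "wts mu (sh0 mu) (pad mu) = map (pad mu) [2..<Suc (length mu)]"
    unfolding wts_def by (intro map_cong) (auto simp: sh0_ge2)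
  then show ?thesis unfolding root_eq compL_def by simp
qed

lemma tvl_eq: "terminal_vertices_labelled mu tau = TLs mu (pad tau) (root_label mu)"
  unfolding terminal_vertices_labelled_def terminal_vertices_def tree_vertices_def TLs_def tree_label_def
  using target_not_internal by auto

theorem lemma6p18:
  fixes s :: nat and mu tau :: "nat list"
  assumes "is_partition_of s mu" and "is_partition_of s tau"
  shows "\<exists>f. bij_betw f (terminal_vertices_labelled mu tau) (SStd tau mu)"
proof -
  have srt: "sorted_wrt (\<ge>) tau" using assms(2) unfolding is_partition_of_def by simp
  interpret TT tau mu using srt by unfold_locales
  have tm: "finite (TLs mu (pad tau) (root_label mu)) \<and> card (TLs mu (pad tau) (root_label mu)) = card (compL mu (pad tau) (root_label mu))"
    using tree_main[OF root_inv] .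
  have b: "bij_betw (\<lambda>T. map (NN tau T) [2..<Suc (length mu)]) (SStd tau mu) (Ch (pad tau) (sh0 mu) 2 (map (pad mu) [2..<Suc (length mu)]))"
    using SStd_bij .
  have f1: "finite (SStd tau mu)" using bij_betw_finite[OF b] finite_Ch by blast
  have c1: "card (SStd tau mu) = card (Ch (pad tau) (sh0 mu) 2 (map (pad mu) [2..<Suc (length mu)]))"
    using bij_betw_same_card[OF b] .
  show ?thesis unfolding tvl_eq
    by (rule finite_same_card_bij) (use tm f1 c1 root_comp in auto)
qed


end
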